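(* Let $(v_0,V,E,\pi)$ be an oriented F-graph that is acyclic and independent, with $\pi:E\to\mathbb{R}_{>0}$. Define $\mathrm{Out}:V\to\mathbb{R}_{\ge0}$ by the recurrence $$\mathrm{Out}(s)=\mathbf{1}_{s=v_0}+\sum_{\substack{e'\in E\\ s\in\mathbf{h}(e')}}\pi(e')\,\mathrm{Out}(t(e'))\prod_{\substack{s'\in\mathbf{h}(e')\\ s'\neq s}}W(s').$$ Then for every arc $e\in E$, $$\sum_{\substack{p\in\mathcal{P}(v_0)\\ e\in p}}\pi(p)=\mathrm{Out}(t(e))\cdot\pi(e)\cdot\prod_{s'\in\mathbf{h}(e)}W(s'),$$ and consequently the probability that a random F-path $p\in\mathcal{P}(v_0)$, drawn with probability $\pi(p)/W(v_0)$, uses the arc $e$ equals $$p_e=\frac{\mathrm{Out}(t(e))\cdot\pi(e)\cdot\prod_{s'\in\mathbf{h}(e)}W(s')}{W(v_0)}.$$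
   Context: An F-graph is a pair $(V,E)$ where $V$ is a finite set of vertices and $E$ is a finite set of F-arcs; an F-arc $e=(t(e)\to\mathbf{h}(e))$ has a single tail vertex $t(e)\in V$ and a head $\mathbf{h}(e)=(t_1,\dots,t_r)$, a finite (possibly empty) ordered list of vertices. The F-paths from $s\in V$ are defined recursively: for any arc $e=(s\to(t_1,\dots,t_r))\in E$ and any F-paths $p_1,\dots,p_r$ from $t_1,\dots,t_r$, the tree $\langle e;p_1,\dots,p_r\rangle$ is an F-path from $s$ (a leaf if $r=0$). $\mathcal{P}(s)$ is the set of F-paths from $s$; "$e\in p$" means that $e$ is the arc used at some node of $p$. The F-graph is acyclic if the directed graph on $V$ with an edge $s\to u$ whenever $u$ occurs in the head of an arc with tail $s$ has no directed cycle; it is independent if in every F-path (from any root) each vertex of $V$ labels at most one node. An oriented F-graph $(v_0,V,E,\pi)$ is a weighted independent F-graph with a distinguished initial vertex $v_0\in V$. The weight of an F-path is $\pi(p)=\prod_{\text{nodes }x}\pi(e_x)$, $e_x$ being the arc used at node $x$, and $W(s)=\sum_{p\in\mathcal{P}(s)}\pi(p)$ (empty sum $0$, empty product $1$); $\mathbf{1}_{s=v_0}$ is $1$ if $s=v_0$ and $0$ otherwise. *)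

theory Defs
  imports Complex_Main
begin

text \<open>F-paths are finite rooted ordered trees whose nodes are labelled by arcs.\<close>
datatype 'e fpath = FNode 'e "'e fpath list"

text \<open>An F-graph is given by a vertex set V, an arc set E, a tail map and a head map
  (head e is an ordered, possibly empty, list of vertices).\<close>

inductive is_fpath :: "'e set \<Rightarrow> ('e \<Rightarrow> 'v) \<Rightarrow> ('e \<Rightarrow> 'v list) \<Rightarrow> 'v \<Rightarrow> 'e fpath \<Rightarrow> bool"
  for E tail heads where
  mk: "e \<in> E \<Longrightarrow> tail e = s \<Longrightarrow> list_all2 (is_fpath E tail heads) (heads e) ps
       \<Longrightarrow> is_fpath E tail heads s (FNode e ps)"

fun fpath_arcs :: "'e fpath \<Rightarrow> 'e list" where
  "fpath_arcs (FNode e ps) = e # concat (map fpath_arcs ps)"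

definition fpath_weight :: "('e \<Rightarrow> real) \<Rightarrow> 'e fpath \<Rightarrow> real" where
  "fpath_weight \<pi> p = prod_list (map \<pi> (fpath_arcs p))"

definition W :: "'e set \<Rightarrow> ('e \<Rightarrow> 'v) \<Rightarrow> ('e \<Rightarrow> 'v list) \<Rightarrow> ('e \<Rightarrow> real) \<Rightarrow> 'v \<Rightarrow> real" where
  "W E tail heads \<pi> s = (\<Sum>p\<in>{p. is_fpath E tail heads s p}. fpath_weight \<pi> p)"

definition is_fgraph :: "'v set \<Rightarrow> 'e set \<Rightarrow> ('e \<Rightarrow> 'v) \<Rightarrow> ('e \<Rightarrow> 'v list) \<Rightarrow> bool" where
  "is_fgraph V E tail heads \<longleftrightarrow> finite V \<and> finite E \<and>
     (\<forall>e\<in>E. tail e \<in> V \<and> set (heads e) \<subseteq> V)"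

definition fgraph_acyclic :: "'e set \<Rightarrow> ('e \<Rightarrow> 'v) \<Rightarrow> ('e \<Rightarrow> 'v list) \<Rightarrow> bool" where
  "fgraph_acyclic E tail heads \<longleftrightarrow> acyclic {(s, u). \<exists>e\<in>E. tail e = s \<and> u \<in> set (heads e)}"

text \<open>Independent: in every F-path (from any root) each vertex labels at most one node,
  the label of a node being the tail of its arc.\<close>
definition fgraph_independent :: "'e set \<Rightarrow> ('e \<Rightarrow> 'v) \<Rightarrow> ('e \<Rightarrow> 'v list) \<Rightarrow> bool" where
  "fgraph_independent E tail heads \<longleftrightarrow>
     (\<forall>s p. is_fpath E tail heads s p \<longrightarrow> distinct (map tail (fpath_arcs p)))"

end

theory Submission
  imports Defs
begin

lemma lall2_Cons_set:
  "{ps. list_all2 Q (a#hs) ps} = (\<lambda>(p,ps). p#ps) ` ({p. Q a p} \<times> {ps. list_all2 Q hs ps})"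
  by (auto simp: list_all2_Cons1 image_iff)

lemma lall2_finite:
  assumes "\<forall>h\<in>set hs. finite {p. Q h p}"
  shows "finite {ps. list_all2 Q hs ps}"
  using assms
proof (induction hs)
  case Nil then show ?case by simp
next
  case (Cons a hs) then show ?case by (simp add: lall2_Cons_set)
qed

lemma lall2_sum_prod:
  fixes g :: "'h \<Rightarrow> 'p \<Rightarrow> real"
  assumes "\<forall>h\<in>set hs. finite {p. Q h p}"
  shows "(\<Sum>ps\<in>{ps. list_all2 Q hs ps}. prod_list (map2 g hs ps))
         = prod_list (map (\<lambda>h. \<Sum>p\<in>{p. Q h p}. g h p) hs)"
  using assms
proof (induction hs)
  case Nil then show ?case by simp
next
  case (Cons a hs)
  have inj: "inj_on (\<lambda>(p,ps). p#ps) X" for X :: "('p \<times> 'p list) set"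
    by (auto simp: inj_on_def)
  have fin1: "finite {p. Q a p}" using Cons.prems by simp
  have fin2: "finite {ps. list_all2 Q hs ps}" using Cons.prems by (intro lall2_finite) simp
  have "(\<Sum>ps\<in>{ps. list_all2 Q (a#hs) ps}. prod_list (map2 g (a#hs) ps))
      = (\<Sum>(p,ps)\<in>{p. Q a p} \<times> {ps. list_all2 Q hs ps}. g a p * prod_list (map2 g hs ps))"
    unfolding lall2_Cons_set by (subst sum.reindex[OF inj]) (simp add: case_prod_unfold)
  also have "\<dots> = (\<Sum>p\<in>{p. Q a p}. \<Sum>ps\<in>{ps. list_all2 Q hs ps}. g a p * prod_list (map2 g hs ps))"
    by (rule sum.cartesian_product[symmetric])
  also have "\<dots> = (\<Sum>p\<in>{p. Q a p}. g a p) * (\<Sum>ps\<in>{ps. list_all2 Q hs ps}. prod_list (map2 g hs ps))"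
    by (rule sum_product[symmetric])
  finally show ?case using Cons by simp
qed

lemma lall2_exists:
  "(\<forall>h\<in>set hs. \<exists>p. Q h p) \<Longrightarrow> \<exists>ps. list_all2 Q hs ps"
proof (induction hs)
  case Nil then show ?case by auto
next
  case (Cons a hs)
  then obtain p ps where "Q a p" "list_all2 Q hs ps" by auto
  then show ?case by (intro exI[of _ "p#ps"]) simp
qed

lemma map2_ignore:
  assumes "length hs = length ps" "a \<notin> set hs"
  shows "map2 (\<lambda>h p. if h = a then X h p else f p) hs ps = map f ps"
  using assms by (induction hs ps rule: list_induct2) auto

lemma map2_const:
  assumes "length hs = length ps"
  shows "map2 (\<lambda>h p. f p) hs ps = map f ps"
  using assms by (induction hs ps rule: list_induct2) auto

lemma prod_list_if_distinct:
  fixes f :: "'a \<Rightarrow> real"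
  assumes "distinct hs" "u \<in> set hs"
  shows "prod_list (map (\<lambda>h. if h = u then a else f h) hs) = a * prod_list (map f (filter (\<lambda>h. h \<noteq> u) hs))"
  using assms
proof (induction hs)
  case Nil then show ?case by simp
next
  case (Cons b hs)
  show ?case
  proof (cases "b = u")
    case True
    then have "u \<notin> set hs" using Cons.prems by simp
    then have eq: "prod_list (map (\<lambda>h. if h = u then a else f h) hs) = prod_list (map f hs)" by (induction hs) auto
    have filt: "filter (\<lambda>h. h \<noteq> u) hs = hs" using \<open>u \<notin> set hs\<close> by (induction hs) auto
    show ?thesis using True by (simp add: eq filt)
  next
    case False
    then show ?thesis using Cons by simp
  qed
qed

fun froot :: "'e fpath \<Rightarrow> 'e" where
  "froot (FNode e ps) = e"

lemma froot_in: "froot p \<in> set (fpath_arcs p)"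
  by (cases p) simp

lemma weight_node: "fpath_weight \<pi> (FNode e ps) = \<pi> e * prod_list (map (fpath_weight \<pi>) ps)"
proof -
  have "prod_list (map \<pi> (concat (map fpath_arcs ps))) = prod_list (map (fpath_weight \<pi>) ps)"
    by (induction ps) (simp_all add: fpath_weight_def)
  then show ?thesis by (simp add: fpath_weight_def)
qed

lemma distinct_roots:
  "distinct (map tail (concat (map fpath_arcs ps))) \<Longrightarrow> distinct (map (tail \<circ> froot) ps)"
proof (induction ps)
  case Nil then show ?case by simp
next
  case (Cons q qs)
  have "tail (froot q) \<in> set (map tail (fpath_arcs q))" using froot_in by auto
  moreover have "set (map (tail \<circ> froot) qs) \<subseteq> set (map tail (concat (map fpath_arcs qs)))"
    using froot_in by fastforce
  ultimately show ?case using Cons by auto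
qed

lemma pointwise:
  fixes wt :: "'e fpath \<Rightarrow> real" and tail :: "'e \<Rightarrow> 'v"
  assumes "length hs = length ps" "distinct hs" "distinct (map tail (concat (map fpath_arcs ps)))"
  shows "(\<Sum>u\<in>set hs. prod_list (map2 (\<lambda>h p. if h = u then (if e \<in> set (fpath_arcs p) then wt p else 0) else wt p) hs ps))
     = (if e \<in> set (concat (map fpath_arcs ps)) then prod_list (map wt ps) else 0)"
  using assms
proof (induction hs ps rule: list_induct2)
  case Nil then show ?case by simp
next
  case (Cons a hs p ps)
  let ?g = "\<lambda>u h p. if h = u then (if e \<in> set (fpath_arcs p) then wt p else 0) else wt p"
  have ahs: "a \<notin> set hs" and dhs: "distinct hs" using Cons.prems by auto
  have d: "distinct (map tail (fpath_arcs p) @ map tail (concat (map fpath_arcs ps)))"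
    using Cons.prems by simp
  then have dps: "distinct (map tail (concat (map fpath_arcs ps)))" by simp
  have notboth: "\<not> (e \<in> set (fpath_arcs p) \<and> e \<in> set (concat (map fpath_arcs ps)))"
  proof
    assume "e \<in> set (fpath_arcs p) \<and> e \<in> set (concat (map fpath_arcs ps))"
    then have "tail e \<in> set (map tail (fpath_arcs p))" "tail e \<in> set (map tail (concat (map fpath_arcs ps)))"
      by auto
    then show False using d by auto
  qed
  have m: "map2 (?g a) hs ps = map wt ps"
    using map2_ignore[OF Cons.hyps ahs, of "\<lambda>h p. if e \<in> set (fpath_arcs p) then wt p else 0" wt] by simp
  have "(\<Sum>u\<in>set (a#hs). prod_list (map2 (?g u) (a#hs) (p#ps)))
     = ?g a a p * prod_list (map2 (?g a) hs ps) + (\<Sum>u\<in>set hs. ?g u a p * prod_list (map2 (?g u) hs ps))"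
    using ahs by (simp add: sum.insert)
  also have "(\<Sum>u\<in>set hs. ?g u a p * prod_list (map2 (?g u) hs ps)) = wt p * (\<Sum>u\<in>set hs. prod_list (map2 (?g u) hs ps))"
    using ahs by (auto simp: sum_distrib_left intro!: sum.cong)
  also have "(\<Sum>u\<in>set hs. prod_list (map2 (?g u) hs ps)) = (if e \<in> set (concat (map fpath_arcs ps)) then prod_list (map wt ps) else 0)"
    using Cons.IH dhs dps by simp
  finally show ?case using notboth by (auto simp: m)
qed

definition Aw :: "'e set \<Rightarrow> ('e \<Rightarrow> 'v) \<Rightarrow> ('e \<Rightarrow> 'v list) \<Rightarrow> ('e \<Rightarrow> real) \<Rightarrow> 'e \<Rightarrow> 'v \<Rightarrow> real" where
  "Aw E tail heads \<pi> e u = (\<Sum>p\<in>{p. is_fpath E tail heads u p \<and> e \<in> set (fpath_arcs p)}. fpath_weight \<pi> p)"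

context
  fixes E :: "'e set" and tail :: "'e \<Rightarrow> 'v" and heads :: "'e \<Rightarrow> 'v list" and \<pi> :: "'e \<Rightarrow> real"
begin

lemma froot_tail: "is_fpath E tail heads s p \<Longrightarrow> tail (froot p) = s"
  by (erule is_fpath.cases) auto

lemma roots_heads: "list_all2 (is_fpath E tail heads) hs ps \<Longrightarrow> map (tail \<circ> froot) ps = hs"
  by (induction rule: list_all2_induct) (auto simp: froot_tail)

lemma fpath_set:
  "{p. is_fpath E tail heads s p} = (\<lambda>(e',ps). FNode e' ps) `
     (SIGMA e':{e'\<in>E. tail e' = s}. {ps. list_all2 (is_fpath E tail heads) (heads e') ps})"
  by (auto elim: is_fpath.cases intro: is_fpath.mk simp: image_iff)

lemma fpath_reach:
  "is_fpath E tail heads s p \<Longrightarrow> e \<in> set (fpath_arcs p) \<Longrightarrow>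
    (s, tail e) \<in> {(s, u). \<exists>e\<in>E. tail e = s \<and> u \<in> set (heads e)}\<^sup>*"
proof (induction rule: is_fpath.induct)
  case (mk e' s ps)
  show ?case
  proof (cases "e = e'")
    case True then show ?thesis using mk by simp
  next
    case False
    then obtain q where q: "q \<in> set ps" "e \<in> set (fpath_arcs q)" using mk.prems by auto
    then obtain i where i: "i < length ps" "ps ! i = q" by (auto simp: in_set_conv_nth)
    have len: "length (heads e') = length ps" using mk.IH by (simp add: list_all2_lengthD)
    have "(heads e' ! i, tail e) \<in> {(s, u). \<exists>e\<in>E. tail e = s \<and> u \<in> set (heads e)}\<^sup>*"
      using mk.IH i q by (auto simp: list_all2_conv_all_nth)
    moreover have "(s, heads e' ! i) \<in> {(s, u). \<exists>e\<in>E. tail e = s \<and> u \<in> set (heads e)}"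
      using mk.hyps(1,2) i len by auto
    ultimately show ?thesis by (meson converse_rtrancl_into_rtrancl)
  qed
qed

lemma fpath_finite:
  assumes "finite E" "acyclic {(s, u). \<exists>e\<in>E. tail e = s \<and> u \<in> set (heads e)}"
  shows "finite {p. is_fpath E tail heads s p}"
proof -
  let ?R = "{(s, u). \<exists>e\<in>E. tail e = s \<and> u \<in> set (heads e)}"
  have "?R \<subseteq> (\<Union>e\<in>E. {tail e} \<times> set (heads e))" by auto
  moreover have "finite (\<Union>e\<in>E. {tail e} \<times> set (heads e))" using assms(1) by auto
  ultimately have "finite ?R" by (rule finite_subset)
  then have wf: "wf (?R\<inverse>)" using assms(2) by (rule finite_acyclic_wf_converse)
  show ?thesis
  proof (induction s rule: wf_induct[OF wf])
    case (1 s)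
    have "finite (SIGMA e':{e'\<in>E. tail e' = s}. {ps. list_all2 (is_fpath E tail heads) (heads e') ps})"
    proof (rule finite_SigmaI)
      show "finite {e' \<in> E. tail e' = s}" using assms(1) by simp
    next
      fix e' assume "e' \<in> {e' \<in> E. tail e' = s}"
      then show "finite {ps. list_all2 (is_fpath E tail heads) (heads e') ps}"
        using 1 by (intro lall2_finite) auto
    qed
    then show ?case by (subst fpath_set) simp
  qed
qed



lemma key_sum:
  assumes fin: "\<forall>h\<in>set hs. finite {p. is_fpath E tail heads h p}"
    and D: "\<forall>ps. list_all2 (is_fpath E tail heads) hs ps \<longrightarrow> distinct (map tail (concat (map fpath_arcs ps)))"
  shows "(\<Sum>ps\<in>{ps. list_all2 (is_fpath E tail heads) hs ps}. if e \<in> set (concat (map fpath_arcs ps)) then prod_list (map (fpath_weight \<pi>) ps) else 0)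
    = (\<Sum>u\<in>set hs. Aw E tail heads \<pi> e u * prod_list (map (W E tail heads \<pi>) (filter (\<lambda>s'. s' \<noteq> u) hs)))"
proof (cases "{ps. list_all2 (is_fpath E tail heads) hs ps} = {}")
  case True
  then have "\<not> (\<forall>h\<in>set hs. \<exists>p. is_fpath E tail heads h p)" using lall2_exists by blast
  then obtain h0 where h0: "h0 \<in> set hs" "{p. is_fpath E tail heads h0 p} = {}" by auto
  have "Aw E tail heads \<pi> e u * prod_list (map (W E tail heads \<pi>) (filter (\<lambda>s'. s' \<noteq> u) hs)) = 0"
    if "u \<in> set hs" for u
  proof (cases "u = h0")
    case True then have "Aw E tail heads \<pi> e u = 0" using h0 by (simp add: Aw_def)
    then show ?thesis by simp
  next
    case False
    then have "h0 \<in> set (filter (\<lambda>s'. s' \<noteq> u) hs)" using h0 by simp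
    moreover have "W E tail heads \<pi> h0 = 0" using h0 by (simp add: W_def)
    ultimately have "prod_list (map (W E tail heads \<pi>) (filter (\<lambda>s'. s' \<noteq> u) hs)) = 0"
      by (force simp: prod_list_zero_iff)
    then show ?thesis by simp
  qed
  then have "(\<Sum>u\<in>set hs. Aw E tail heads \<pi> e u * prod_list (map (W E tail heads \<pi>) (filter (\<lambda>s'. s' \<noteq> u) hs))) = 0"
    by (intro sum.neutral) blast
  then show ?thesis using True by simp
next
  case False
  then obtain ps0 where ps0: "list_all2 (is_fpath E tail heads) hs ps0" by auto
  have dhs: "distinct hs" using D ps0 roots_heads[OF ps0] distinct_roots by metis
  define g :: "'v \<Rightarrow> 'v \<Rightarrow> 'e fpath \<Rightarrow> real" where "g u h p = (if h = u then (if e \<in> set (fpath_arcs p) then fpath_weight \<pi> p else 0) else fpath_weight \<pi> p)" for u h p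
  let ?L = "{ps. list_all2 (is_fpath E tail heads) hs ps}"
  have "(\<Sum>ps\<in>?L. if e \<in> set (concat (map fpath_arcs ps)) then prod_list (map (fpath_weight \<pi>) ps) else 0)
      = (\<Sum>ps\<in>?L. \<Sum>u\<in>set hs. prod_list (map2 (g u) hs ps))"
  proof (rule sum.cong[OF refl])
    fix ps assume "ps \<in> ?L"
    then have "length hs = length ps" "distinct (map tail (concat (map fpath_arcs ps)))"
      using D by (auto simp: list_all2_lengthD)
    from pointwise[OF this(1) dhs this(2), of e "fpath_weight \<pi>"]
    show "(if e \<in> set (concat (map fpath_arcs ps)) then prod_list (map (fpath_weight \<pi>) ps) else 0)
      = (\<Sum>u\<in>set hs. prod_list (map2 (g u) hs ps))" by (simp add: g_def)
  qed
  also have "\<dots> = (\<Sum>u\<in>set hs. \<Sum>ps\<in>?L. prod_list (map2 (g u) hs ps))" by (rule sum.swap)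
  also have "\<dots> = (\<Sum>u\<in>set hs. prod_list (map (\<lambda>h. \<Sum>p\<in>{p. is_fpath E tail heads h p}. g u h p) hs))"
    by (simp add: lall2_sum_prod[OF fin])
  also have "\<dots> = (\<Sum>u\<in>set hs. prod_list (map (\<lambda>h. if h = u then Aw E tail heads \<pi> e u else W E tail heads \<pi> h) hs))"
  proof (intro sum.cong refl arg_cong[where f=prod_list] map_cong)
    fix u h assume "h \<in> set hs"
    then have fh: "finite {p. is_fpath E tail heads h p}" using fin by auto
    show "(\<Sum>p\<in>{p. is_fpath E tail heads h p}. g u h p) = (if h = u then Aw E tail heads \<pi> e u else W E tail heads \<pi> h)"
      using sum.inter_filter[OF fh, of "fpath_weight \<pi>" "\<lambda>p. e \<in> set (fpath_arcs p)"]
      by (auto simp: g_def Aw_def W_def)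
  qed
  also have "\<dots> = (\<Sum>u\<in>set hs. Aw E tail heads \<pi> e u * prod_list (map (W E tail heads \<pi>) (filter (\<lambda>s'. s' \<noteq> u) hs)))"
    by (rule sum.cong[OF refl]) (simp add: prod_list_if_distinct[OF dhs])
  finally show ?thesis .
qed


lemma A_expand:
  assumes finE: "finite E" and finP: "\<forall>h. finite {p. is_fpath E tail heads h p}"
  shows "Aw E tail heads \<pi> e s = (\<Sum>e'\<in>{e'\<in>E. tail e' = s}. \<Sum>ps\<in>{ps. list_all2 (is_fpath E tail heads) (heads e') ps}.
            if e \<in> set (fpath_arcs (FNode e' ps)) then \<pi> e' * prod_list (map (fpath_weight \<pi>) ps) else 0)"
proof -
  have inj: "inj_on (\<lambda>(e',ps). FNode e' ps) X" for X :: "('e \<times> 'e fpath list) set"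
    by (auto simp: inj_on_def)
  have fA: "finite {e'\<in>E. tail e' = s}" using finE by simp
  have fB: "\<forall>e'\<in>{e'\<in>E. tail e' = s}. finite {ps. list_all2 (is_fpath E tail heads) (heads e') ps}"
    using finP by (auto intro: lall2_finite)
  have "Aw E tail heads \<pi> e s = (\<Sum>p\<in>{p. is_fpath E tail heads s p}. if e \<in> set (fpath_arcs p) then fpath_weight \<pi> p else 0)"
    using sum.inter_filter[OF finP[rule_format, of s], of "fpath_weight \<pi>" "\<lambda>p. e \<in> set (fpath_arcs p)"]
    by (simp add: Aw_def)
  also have "\<dots> = (\<Sum>(e',ps)\<in>(SIGMA e':{e'\<in>E. tail e' = s}. {ps. list_all2 (is_fpath E tail heads) (heads e') ps}).
       if e \<in> set (fpath_arcs (FNode e' ps)) then fpath_weight \<pi> (FNode e' ps) else 0)"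
    unfolding fpath_set[of s] by (subst sum.reindex[OF inj]) (simp add: case_prod_unfold)
  also have "\<dots> = (\<Sum>e'\<in>{e'\<in>E. tail e' = s}. \<Sum>ps\<in>{ps. list_all2 (is_fpath E tail heads) (heads e') ps}.
            if e \<in> set (fpath_arcs (FNode e' ps)) then \<pi> e' * prod_list (map (fpath_weight \<pi>) ps) else 0)"
    by (subst sum.Sigma[OF fA fB]) (rule sum.cong[OF refl], auto simp: weight_node)
  finally show ?thesis .
qed

lemma A_other:
  assumes finE: "finite E" and finP: "\<forall>h. finite {p. is_fpath E tail heads h p}"
    and indep: "fgraph_independent E tail heads" and ne: "s \<noteq> tail e"
  shows "Aw E tail heads \<pi> e s = (\<Sum>e'\<in>{e'\<in>E. tail e' = s}. \<pi> e' *
      (\<Sum>u\<in>set (heads e'). Aw E tail heads \<pi> e u * prod_list (map (W E tail heads \<pi>) (filter (\<lambda>s'. s' \<noteq> u) (heads e')))))"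
proof (rule trans[OF A_expand[OF finE finP, of e s]], rule sum.cong[OF refl])
  fix e' assume e': "e' \<in> {e'\<in>E. tail e' = s}"
  then have nee: "e \<noteq> e'" using ne by auto
  have D: "\<forall>ps. list_all2 (is_fpath E tail heads) (heads e') ps \<longrightarrow> distinct (map tail (concat (map fpath_arcs ps)))"
  proof (intro allI impI)
    fix ps assume "list_all2 (is_fpath E tail heads) (heads e') ps"
    then have "is_fpath E tail heads s (FNode e' ps)" using e' by (auto intro: is_fpath.mk)
    then have "distinct (map tail (fpath_arcs (FNode e' ps)))" using indep unfolding fgraph_independent_def by blast
    then show "distinct (map tail (concat (map fpath_arcs ps)))" by simp
  qed
  have fin: "\<forall>h\<in>set (heads e'). finite {p. is_fpath E tail heads h p}" using finP by blast
  have "(\<Sum>ps\<in>{ps. list_all2 (is_fpath E tail heads) (heads e') ps}.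
            if e \<in> set (fpath_arcs (FNode e' ps)) then \<pi> e' * prod_list (map (fpath_weight \<pi>) ps) else 0)
     = \<pi> e' * (\<Sum>ps\<in>{ps. list_all2 (is_fpath E tail heads) (heads e') ps}.
            if e \<in> set (concat (map fpath_arcs ps)) then prod_list (map (fpath_weight \<pi>) ps) else 0)"
    using nee by (auto simp: sum_distrib_left intro!: sum.cong)
  then show "(\<Sum>ps\<in>{ps. list_all2 (is_fpath E tail heads) (heads e') ps}.
            if e \<in> set (fpath_arcs (FNode e' ps)) then \<pi> e' * prod_list (map (fpath_weight \<pi>) ps) else 0)
     = \<pi> e' * (\<Sum>u\<in>set (heads e'). Aw E tail heads \<pi> e u * prod_list (map (W E tail heads \<pi>) (filter (\<lambda>s'. s' \<noteq> u) (heads e'))))"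
    using key_sum[OF fin D, of e] by simp
qed

lemma A_self:
  assumes finE: "finite E" and finP: "\<forall>h. finite {p. is_fpath E tail heads h p}"
    and indep: "fgraph_independent E tail heads" and eE: "e \<in> E"
  shows "Aw E tail heads \<pi> e (tail e) = \<pi> e * prod_list (map (W E tail heads \<pi>) (heads e))"
proof -
  have "Aw E tail heads \<pi> e (tail e) = (\<Sum>e'\<in>{e'\<in>E. tail e' = tail e}.
      if e' = e then \<pi> e * prod_list (map (W E tail heads \<pi>) (heads e)) else 0)"
    unfolding A_expand[OF finE finP]
  proof (rule sum.cong[OF refl])
    fix e' assume e': "e' \<in> {e'\<in>E. tail e' = tail e}"
    show "(\<Sum>ps\<in>{ps. list_all2 (is_fpath E tail heads) (heads e') ps}.
            if e \<in> set (fpath_arcs (FNode e' ps)) then \<pi> e' * prod_list (map (fpath_weight \<pi>) ps) else 0)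
        = (if e' = e then \<pi> e * prod_list (map (W E tail heads \<pi>) (heads e)) else 0)"
    proof (cases "e' = e")
      case True
      have fin: "\<forall>h\<in>set (heads e). finite {p. is_fpath E tail heads h p}" using finP by blast
      have "(\<Sum>ps\<in>{ps. list_all2 (is_fpath E tail heads) (heads e) ps}. prod_list (map (fpath_weight \<pi>) ps))
          = (\<Sum>ps\<in>{ps. list_all2 (is_fpath E tail heads) (heads e) ps}. prod_list (map2 (\<lambda>h p. fpath_weight \<pi> p) (heads e) ps))"
        by (rule sum.cong[OF refl]) (simp add: map2_const list_all2_lengthD)
      also have "\<dots> = prod_list (map (W E tail heads \<pi>) (heads e))"
      proof -
        have "(\<lambda>h. \<Sum>p\<in>{p. is_fpath E tail heads h p}. fpath_weight \<pi> p) = W E tail heads \<pi>"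
          by (rule ext) (simp add: W_def)
        then show ?thesis by (simp add: lall2_sum_prod[OF fin])
      qed
      finally show ?thesis using True by (simp add: sum_distrib_left[symmetric])
    next
      case False
      have "e \<notin> set (fpath_arcs (FNode e' ps))" if ps: "list_all2 (is_fpath E tail heads) (heads e') ps" for ps
      proof
        assume a: "e \<in> set (fpath_arcs (FNode e' ps))"
        have "is_fpath E tail heads (tail e) (FNode e' ps)" using e' ps by (auto intro: is_fpath.mk)
        then have "distinct (map tail (fpath_arcs (FNode e' ps)))" using indep unfolding fgraph_independent_def by blast
        moreover have "e \<in> set (concat (map fpath_arcs ps))" using a False by auto
        ultimately show False using e' by (auto simp: image_iff)
      qed
      then show ?thesis using False by (auto intro!: sum.neutral)
    qed
  qed
  also have "\<dots> = \<pi> e * prod_list (map (W E tail heads \<pi>) (heads e))"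
    using finE eE by (simp add: sum.delta')
  finally show ?thesis .
qed

lemma A_reach:
  assumes "Aw E tail heads \<pi> e u \<noteq> 0"
  shows "(u, tail e) \<in> {(s, u). \<exists>e\<in>E. tail e = s \<and> u \<in> set (heads e)}\<^sup>*"
proof -
  have "{p. is_fpath E tail heads u p \<and> e \<in> set (fpath_arcs p)} \<noteq> {}"
  proof
    assume h: "{p. is_fpath E tail heads u p \<and> e \<in> set (fpath_arcs p)} = {}"
    have "Aw E tail heads \<pi> e u = 0" unfolding Aw_def h by simp
    then show False using assms by simp
  qed
  then obtain p where "is_fpath E tail heads u p" "e \<in> set (fpath_arcs p)" by auto
  then show ?thesis by (rule fpath_reach)
qed

end


lemma sum_restrict_sub:
  fixes f :: "'a \<Rightarrow> real"
  assumes "finite V" "B \<subseteq> V"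
  shows "(\<Sum>u\<in>V. if u \<in> B then f u else 0) = sum f B"
proof -
  have "(\<Sum>u\<in>V. if u \<in> B then f u else 0) = sum f (V \<inter> B)"
    using sum.inter_restrict[OF assms(1), of f B] by simp
  also have "V \<inter> B = B" using assms(2) by auto
  finally show ?thesis .
qed

theorem mainTheorem5:
  fixes V :: "'v set" and E :: "'e set" and tail :: "'e \<Rightarrow> 'v" and heads :: "'e \<Rightarrow> 'v list"
    and \<pi> :: "'e \<Rightarrow> real" and v0 :: 'v and Out :: "'v \<Rightarrow> real"
  assumes fg: "is_fgraph V E tail heads"
    and v0: "v0 \<in> V"
    and pos: "\<forall>e\<in>E. \<pi> e > 0"
    and acyc: "fgraph_acyclic E tail heads"
    and indep: "fgraph_independent E tail heads"
    and Out_rec: "\<forall>s\<in>V. Out s = (if s = v0 then 1 else 0) +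
        (\<Sum>e'\<in>{e'\<in>E. s \<in> set (heads e')}.
           \<pi> e' * Out (tail e') * prod_list (map (W E tail heads \<pi>) (filter (\<lambda>s'. s' \<noteq> s) (heads e'))))"
    and e: "e \<in> E"
  shows "(\<Sum>p\<in>{p. is_fpath E tail heads v0 p \<and> e \<in> set (fpath_arcs p)}. fpath_weight \<pi> p)
           = Out (tail e) * \<pi> e * prod_list (map (W E tail heads \<pi>) (heads e))
      \<and> (\<Sum>p\<in>{p. is_fpath E tail heads v0 p \<and> e \<in> set (fpath_arcs p)}. fpath_weight \<pi> p / W E tail heads \<pi> v0)
           = Out (tail e) * \<pi> e * prod_list (map (W E tail heads \<pi>) (heads e)) / W E tail heads \<pi> v0"
proof -
  let ?R = "{(s, u). \<exists>e\<in>E. tail e = s \<and> u \<in> set (heads e)}"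
  define A where "A = Aw E tail heads \<pi> e"
  define C where "C = \<pi> e * prod_list (map (W E tail heads \<pi>) (heads e))"
  define wf where "wf e' u = prod_list (map (W E tail heads \<pi>) (filter (\<lambda>s'. s' \<noteq> u) (heads e')))" for e' u
  define x where "x = tail e"
  have finV: "finite V" and finE: "finite E" and tV: "\<And>e'. e' \<in> E \<Longrightarrow> tail e' \<in> V"
    and hV: "\<And>e'. e' \<in> E \<Longrightarrow> set (heads e') \<subseteq> V"
    using fg by (auto simp: is_fgraph_def)
  have acR: "acyclic ?R" using acyc by (simp add: fgraph_acyclic_def)
  have finP: "\<forall>h. finite {p. is_fpath E tail heads h p}"
    using fpath_finite[OF finE acR] by blast
  have xV: "x \<in> V" using tV e by (simp add: x_def)
  have K: "A s = (if s = x then C else 0) + (\<Sum>e'\<in>{e'\<in>E. tail e' = s}. \<pi> e' * (\<Sum>u\<in>set (heads e'). A u * wf e' u))"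
    for s
  proof (cases "s = x")
    case True
    have "(\<Sum>e'\<in>{e'\<in>E. tail e' = s}. \<pi> e' * (\<Sum>u\<in>set (heads e'). A u * wf e' u)) = 0"
    proof (intro sum.neutral ballI)
      fix e' assume e': "e' \<in> {e'\<in>E. tail e' = s}"
      have "A u = 0" if u: "u \<in> set (heads e')" for u
      proof (rule ccontr)
        assume "A u \<noteq> 0"
        then have "(u, x) \<in> ?R\<^sup>*" unfolding A_def x_def by (rule A_reach)
        moreover have "(x, u) \<in> ?R" using e' u True by auto
        ultimately have "(x, x) \<in> ?R\<^sup>+" by (meson rtrancl_into_trancl2)
        then show False using acR by (simp add: acyclic_def)
      qed
      then show "\<pi> e' * (\<Sum>u\<in>set (heads e'). A u * wf e' u) = 0" by simp
    qed
    moreover have "A s = C" using A_self[OF finE finP indep e] True by (simp add: A_def C_def x_def)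
    ultimately show ?thesis using True by simp
  next
    case False
    then show ?thesis using A_other[OF finE finP indep, of s e] by (simp add: A_def wf_def x_def)
  qed
  define T where "T = (\<Sum>s\<in>V. Out s * (\<Sum>e'\<in>{e'\<in>E. tail e' = s}. \<pi> e' * (\<Sum>u\<in>set (heads e'). A u * wf e' u)))"
  have S1: "(\<Sum>s\<in>V. Out s * A s) = Out x * C + T"
  proof -
    have "(\<Sum>s\<in>V. Out s * A s) = (\<Sum>s\<in>V. (if s = x then Out s * C else 0)
         + Out s * (\<Sum>e'\<in>{e'\<in>E. tail e' = s}. \<pi> e' * (\<Sum>u\<in>set (heads e'). A u * wf e' u)))"
      by (rule sum.cong[OF refl]) (subst K, simp add: distrib_left)
    also have "\<dots> = Out x * C + T" using finV xV by (simp add: sum.distrib T_def)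
    finally show ?thesis .
  qed
  have T1: "T = (\<Sum>e'\<in>E. Out (tail e') * \<pi> e' * (\<Sum>u\<in>set (heads e'). A u * wf e' u))"
  proof -
    have "T = (\<Sum>s\<in>V. \<Sum>e'\<in>{e'\<in>E. tail e' = s}. Out (tail e') * \<pi> e' * (\<Sum>u\<in>set (heads e'). A u * wf e' u))"
      unfolding T_def by (rule sum.cong[OF refl]) (auto simp: sum_distrib_left mult.assoc intro!: sum.cong)
    also have "\<dots> = (\<Sum>e'\<in>E. Out (tail e') * \<pi> e' * (\<Sum>u\<in>set (heads e'). A u * wf e' u))"
      by (rule sum.group[OF finE finV]) (use tV in auto)
    finally show ?thesis .
  qed
  have T2: "T = (\<Sum>u\<in>V. A u * (Out u - (if u = v0 then 1 else 0)))"
  proof -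
    have "T = (\<Sum>e'\<in>E. \<Sum>u\<in>V. if u \<in> set (heads e') then Out (tail e') * \<pi> e' * (A u * wf e' u) else 0)"
      unfolding T1
    proof (rule sum.cong[OF refl])
      fix e' assume "e' \<in> E"
      then show "Out (tail e') * \<pi> e' * (\<Sum>u\<in>set (heads e'). A u * wf e' u)
          = (\<Sum>u\<in>V. if u \<in> set (heads e') then Out (tail e') * \<pi> e' * (A u * wf e' u) else 0)"
        by (subst sum_restrict_sub[OF finV hV]) (auto simp: sum_distrib_left)
    qed
    also have "\<dots> = (\<Sum>u\<in>V. \<Sum>e'\<in>E. if u \<in> set (heads e') then Out (tail e') * \<pi> e' * (A u * wf e' u) else 0)"
      by (rule sum.swap)
    also have "\<dots> = (\<Sum>u\<in>V. A u * (Out u - (if u = v0 then 1 else 0)))"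
    proof (rule sum.cong[OF refl])
      fix u assume uV: "u \<in> V"
      have "(\<Sum>e'\<in>E. if u \<in> set (heads e') then Out (tail e') * \<pi> e' * (A u * wf e' u) else 0)
          = (\<Sum>e'\<in>{e'\<in>E. u \<in> set (heads e')}. Out (tail e') * \<pi> e' * (A u * wf e' u))"
        using sum.inter_filter[OF finE, of "\<lambda>e'. Out (tail e') * \<pi> e' * (A u * wf e' u)" "\<lambda>e'. u \<in> set (heads e')"]
        by simp
      also have "\<dots> = A u * (\<Sum>e'\<in>{e'\<in>E. u \<in> set (heads e')}. \<pi> e' * Out (tail e') * wf e' u)"
        by (simp add: sum_distrib_left mult_ac)
      also have "\<dots> = A u * (Out u - (if u = v0 then 1 else 0))"
        using Out_rec uV by (simp add: wf_def)
      finally show "(\<Sum>e'\<in>E. if u \<in> set (heads e') then Out (tail e') * \<pi> e' * (A u * wf e' u) else 0)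
          = A u * (Out u - (if u = v0 then 1 else 0))" .
    qed
    finally show ?thesis .
  qed
  have dl: "(\<Sum>u\<in>V. A u * (if u = v0 then 1 else 0)) = A v0"
  proof -
    have "(\<Sum>u\<in>V. A u * (if u = v0 then 1 else 0)) = (\<Sum>u\<in>V. if u = v0 then A u else 0)"
      by (rule sum.cong) auto
    also have "\<dots> = A v0" using finV v0 by (simp add: sum.delta')
    finally show ?thesis .
  qed
  have "T = (\<Sum>s\<in>V. Out s * A s) - A v0"
    unfolding T2 using finV v0 dl by (simp add: right_diff_distrib sum_subtractf mult.commute)
  with S1 have main: "A v0 = Out x * C" by simp
  have eq1: "(\<Sum>p\<in>{p. is_fpath E tail heads v0 p \<and> e \<in> set (fpath_arcs p)}. fpath_weight \<pi> p)
           = Out (tail e) * \<pi> e * prod_list (map (W E tail heads \<pi>) (heads e))"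
    using main by (simp add: A_def Aw_def C_def x_def mult.assoc)
  then show ?thesis by (simp add: sum_divide_distrib[symmetric])
qed

end
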